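(* Let $f(z)=z+\sum_{n=2}^\infty a_nz^n\in\mathcal{S}^*_{car}$ and let $f_2(z)=z+a_2z^2$ be its second partial sum. Then $f_2$ is starlike in $|z|<1/2$ and convex in $|z|<1/4$, and $f_2(\rho z)/\rho\in\mathcal{S}^*_{car}$ for $0<\rho\le1/3$. All three constants $1/2$, $1/4$, $1/3$ are sharp (they cannot be replaced by larger numbers).
   Context: $\mathbb{D}=\{z:|z|<1\}$; $\mathcal{A}$ is the class of analytic $f$ on $\mathbb{D}$ with $f(0)=0$, $f'(0)=1$. $F\prec G$ means $F=G\circ w$ for an analytic $w:\mathbb{D}\to\mathbb{D}$ with $w(0)=0$. $\mathcal{S}^*_{car}$ is the class of $f\in\mathcal{A}$ with $zf'(z)/f(z)\prec 1+z+z^2/2$ in $\mathbb{D}$. A function is starlike (resp. convex) in $|z|<r$ if it maps that disk univalently onto a domain starlike with respect to $0$ (resp. convex). *)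

theory Defs
  imports "HOL-Analysis.Analysis"
begin

definition unit_disc :: "complex set" where
  "unit_disc = ball 0 1"

definition classA :: "(complex \<Rightarrow> complex) \<Rightarrow> bool" where
  "classA f \<longleftrightarrow> f holomorphic_on unit_disc \<and> f 0 = 0 \<and> deriv f 0 = 1"

definition subordinate :: "(complex \<Rightarrow> complex) \<Rightarrow> (complex \<Rightarrow> complex) \<Rightarrow> bool" where
  "subordinate F G \<longleftrightarrow>
     (\<exists>w. w holomorphic_on unit_disc \<and> w ` unit_disc \<subseteq> unit_disc \<and> w 0 = 0 \<and>
          (\<forall>z\<in>unit_disc. F z = G (w z)))"

text \<open>The quotient z f'(z)/f(z), with its removable singularity at 0 filled by the value 1.\<close>
definition starquot :: "(complex \<Rightarrow> complex) \<Rightarrow> complex \<Rightarrow> complex" where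
  "starquot f z = (if z = 0 then 1 else z * deriv f z / f z)"

definition cardioid_fun :: "complex \<Rightarrow> complex" where
  "cardioid_fun z = 1 + z + z^2 / 2"

definition S_car :: "(complex \<Rightarrow> complex) \<Rightarrow> bool" where
  "S_car f \<longleftrightarrow> classA f \<and> subordinate (starquot f) cardioid_fun"

definition coeff2 :: "(complex \<Rightarrow> complex) \<Rightarrow> complex" where
  "coeff2 f = deriv (deriv f) 0 / 2"

definition partial2 :: "(complex \<Rightarrow> complex) \<Rightarrow> complex \<Rightarrow> complex" where
  "partial2 f z = z + coeff2 f * z^2"

definition starlike_in :: "(complex \<Rightarrow> complex) \<Rightarrow> real \<Rightarrow> bool" where
  "starlike_in g r \<longleftrightarrow> g holomorphic_on ball 0 r \<and> inj_on g (ball 0 r) \<and>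
     0 \<in> g ` ball 0 r \<and> (\<forall>x\<in>g ` ball 0 r. closed_segment 0 x \<subseteq> g ` ball 0 r)"

definition convex_in :: "(complex \<Rightarrow> complex) \<Rightarrow> real \<Rightarrow> bool" where
  "convex_in g r \<longleftrightarrow> g holomorphic_on ball 0 r \<and> inj_on g (ball 0 r) \<and> convex (g ` ball 0 r)"

end

theory Submission
  imports Defs "HOL-Complex_Analysis.Complex_Analysis"
begin

lemma cmod_sq: "cmod z ^ 2 = Re z ^ 2 + Im z ^ 2"
  by (simp add: cmod_power2)

lemma Re_csqrt_sq: "4 * Re (csqrt w) ^ 2 = 2 * (cmod w + Re w)"
proof -
  have "cmod w + Re w \<ge> 0" using abs_Re_le_cmod[of w] by linarith
  thus ?thesis by simp
qed

lemma key_Re: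
  assumes t: "0 \<le> t" "t \<le> 1" and p: "Re p > 0"
  shows "Re (csqrt (1 - of_real t + of_real t * p^2)) \<ge> t * Re p"
proof -
  define W where "W = 1 - of_real t + of_real t * p^2"
  define x where "x = Re p"
  define y where "y = Im p"
  have ReW: "Re W = 1 - t + t * (x^2 - y^2)" by (simp add: W_def x_def y_def Re_power2)
  have ImW: "Im W = 2 * t * x * y" by (simp add: W_def x_def y_def Im_power2)
  have "(cmod W + Re W) / 2 \<ge> (t * x)^2"
  proof (cases "Re W \<ge> t^2 * x^2")
    case True
    then show ?thesis using complex_Re_le_cmod[of W] by (simp add: power_mult_distrib)
  next
    case False
    have key: "y^2 + Re W - t^2 * x^2 = (1-t)*(1+y^2) + t*(1-t)*x^2"
      by (simp add: ReW power2_eq_square algebra_simps)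
    have "(1-t)*(1+y^2) + t*(1-t)*x^2 \<ge> 0" using t by (intro add_nonneg_nonneg mult_nonneg_nonneg) auto
    hence k2: "y^2 + Re W - t^2 * x^2 \<ge> 0" using key by linarith
    have "(2 * t^2 * x^2 - Re W)^2 \<le> (Re W)^2 + (Im W)^2"
    proof -
      have "(Re W)^2 + (Im W)^2 - (2 * t^2 * x^2 - Re W)^2 = 4 * t^2 * x^2 * (y^2 + Re W - t^2 * x^2)"
        by (simp add: ImW power2_eq_square algebra_simps)
      also have "\<dots> \<ge> 0" using k2 by simp
      finally show ?thesis by linarith
    qed
    hence "2 * t^2 * x^2 - Re W \<le> cmod W"
      by (metis cmod_sq abs_le_square_iff abs_le_iff abs_norm_cancel order_trans linorder_not_le less_imp_le abs_ge_self)
    then show ?thesis by (simp add: power_mult_distrib)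
  qed
  hence "sqrt ((t * x)^2) \<le> sqrt ((cmod W + Re W) / 2)" using real_sqrt_le_mono by blast
  moreover have "sqrt ((t * x)^2) = t * x" using t p by (simp add: x_def)
  ultimately show ?thesis by (simp add: W_def x_def)
qed

lemma key_star:
  assumes t: "0 \<le> t" "t \<le> 1" and p: "Re p > 0"
  shows "cmod (csqrt (1 - of_real t + of_real t * p^2) - 1) \<le> cmod (p - 1)"
proof (rule ccontr)
  define s where "s = csqrt (1 - of_real t + of_real t * p^2)"
  assume "\<not> ?thesis"
  hence AB: "cmod (s - 1) > cmod (p - 1)" by (simp add: s_def)
  have Res: "Re s \<ge> t * Re p" unfolding s_def by (rule key_Re[OF t p])
  have ss: "s^2 = 1 - of_real t + of_real t * p^2" by (simp add: s_def)
  have t0: "t > 0"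
  proof (rule ccontr)
    assume "\<not> t > 0" hence "t = 0" using t by simp
    hence "s = 1" by (simp add: s_def)
    thus False using AB by simp
  qed
  have prod: "(s - 1) * (s + 1) = of_real t * ((p - 1) * (p + 1))"
    using ss by (simp add: algebra_simps power2_eq_square)
  hence prodn: "cmod (s - 1) * cmod (s + 1) = t * (cmod (p - 1) * cmod (p + 1))"
    using t0 by (metis norm_mult norm_of_real abs_of_pos)
  have Dpos: "cmod (p + 1) > 0" using p by (auto simp: complex_eq_iff)
  have Apos: "cmod (s - 1) > 0" using AB norm_ge_zero[of "p-1"] by linarith
  have "t * (cmod (p - 1) * cmod (p + 1)) < t * (cmod (s - 1) * cmod (p + 1))"
    using AB Dpos t0 by simp
  hence "cmod (s - 1) * cmod (s + 1) < cmod (s - 1) * (t * cmod (p + 1))"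
    using prodn by (simp add: algebra_simps)
  hence CD: "cmod (s + 1) < t * cmod (p + 1)" using Apos by simp
  hence CD2: "cmod (s + 1)^2 < (t * cmod (p + 1))^2"
    by (simp add: power_strict_mono)
  define x where "x = Re s"
  define y where "y = Im s"
  define u where "u = Re p"
  define v where "v = Im p"
  have e1: "cmod (s + 1)^2 = (x+1)^2 + y^2" by (simp add: cmod_sq x_def y_def)
  have e2: "cmod (s - 1)^2 = (x-1)^2 + y^2" by (simp add: cmod_sq x_def y_def)
  have e3: "cmod (p + 1)^2 = (u+1)^2 + v^2" by (simp add: cmod_sq u_def v_def)
  have e4: "cmod (p - 1)^2 = (u-1)^2 + v^2" by (simp add: cmod_sq u_def v_def)
  have AB2: "cmod (p - 1)^2 < cmod (s - 1)^2"
    using AB by (simp add: power_strict_mono)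
  have i1: "(x+1)^2 + y^2 < t^2 * ((u+1)^2 + v^2)"
    using CD2 e1 e3 by (simp add: power_mult_distrib)
  have i2: "(u-1)^2 + v^2 < (x-1)^2 + y^2" using AB2 e2 e4 by simp
  have i3: "t^2 * ((u-1)^2 + v^2) \<le> t^2 * ((x-1)^2 + y^2)" using i2 by (intro mult_left_mono) auto
  have "(x+1)^2 + y^2 < t^2 * ((u-1)^2 + v^2) + 4 * t^2 * u"
    using i1 by (simp add: power2_eq_square algebra_simps)
  hence i4: "(x+1)^2 + y^2 - t^2 * ((x-1)^2 + y^2) < 4 * t^2 * u" using i3 by linarith
  have "(x+1)^2 + y^2 - t^2 * ((x-1)^2 + y^2) = (1 - t^2) * (x^2 + y^2 + 1) + 2 * (1 + t^2) * x"
    by (simp add: power2_eq_square algebra_simps)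
  moreover have "(1 - t^2) * (x^2 + y^2 + 1) \<ge> 0" using t by (simp add: power_le_one)
  moreover have "2 * (1 + t^2) * x \<ge> 2 * (1 + t^2) * (t * u)" using Res unfolding x_def u_def by (intro mult_left_mono) auto
  moreover have "2 * (1 + t^2) * (t * u) \<ge> 4 * t^2 * u"
  proof -
    have "2 * (1 + t^2) * (t * u) - 4 * t^2 * u = 2 * t * u * (1 - t)^2" by (simp add: power2_eq_square algebra_simps)
    also have "\<dots> \<ge> 0" using t p by (simp add: u_def)
    finally show ?thesis by simp
  qed
  ultimately show False using i4 by linarith
qed

lemma phi_cond:
  assumes "cmod (p - 1) \<le> \<rho>" "0 \<le> \<rho>" "\<rho> \<le> 1/2"
  shows "(cmod p ^ 2)^2 - 2*\<rho>^2*cmod p ^ 2 + (1-\<rho>^2)^2 - 2 * Re (p^2) \<le> 0"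
    and "cmod p ^ 2 \<ge> \<rho>^2"
proof -
  define x where "x = Re p"
  define y where "y = Im p"
  define r where "r = cmod p ^ 2"
  have r: "r = x^2 + y^2" by (simp add: r_def cmod_sq x_def y_def)
  have "cmod (p - 1) ^ 2 \<le> \<rho>^2" using assms by (simp add: power_mono)
  hence "(x-1)^2 + y^2 \<le> \<rho>^2" by (simp add: cmod_sq x_def y_def)
  hence h1: "r + (1 - \<rho>^2) \<le> 2 * x" by (simp add: r power2_eq_square algebra_simps)
  have "\<rho>^2 \<le> (1/2)^2" using assms by (intro power_mono) auto
  moreover have "r \<ge> 0" by (simp add: r_def)
  ultimately have h0: "0 \<le> r + (1 - \<rho>^2)" by (simp add: power_divide)
  have "(r + (1 - \<rho>^2))^2 \<le> (2*x)^2" by (rule power_mono[OF h1 h0])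
  moreover have "Re (p^2) = x^2 - y^2" by (simp add: x_def y_def Re_power2)
  ultimately show "(cmod p ^ 2)^2 - 2*\<rho>^2*cmod p ^ 2 + (1-\<rho>^2)^2 - 2 * Re (p^2) \<le> 0"
    unfolding r_def[symmetric] using r by (simp add: power2_eq_square algebra_simps)
  have "cmod p \<ge> 1 - cmod (p - 1)" using norm_triangle_ineq2[of 1 "1 - p"] by (simp add: norm_minus_commute)
  hence "cmod p \<ge> \<rho>" using assms by linarith
  thus "cmod p ^ 2 \<ge> \<rho>^2" using assms by (simp add: power_mono)
qed

lemma key_convex:
  assumes r: "0 \<le> \<rho>" "\<rho> \<le> 1/2" and p1: "cmod (p1 - 1) \<le> \<rho>" and p2: "cmod (p2 - 1) \<le> \<rho>"
    and t: "0 \<le> t" "t \<le> 1"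
  shows "cmod (csqrt ((1 - of_real t) * p1^2 + of_real t * p2^2) - 1) \<le> \<rho>"
proof -
  define W where "W = (1 - of_real t) * p1^2 + of_real t * p2^2"
  define s where "s = csqrt W"
  define r1 where "r1 = cmod p1 ^ 2"
  define r2 where "r2 = cmod p2 ^ 2"
  define rr where "rr = cmod W"
  define R where "R = (1 - t) * r1 + t * r2"
  define \<kappa> where "\<kappa> = 1 - \<rho>^2"
  define \<psi> where "\<psi> = (\<lambda>z::real. z^2 - 2*\<rho>^2*z)"
  have c1: "\<psi> r1 + \<kappa>^2 - 2 * Re (p1^2) \<le> 0" and g1: "r1 \<ge> \<rho>^2"
    using phi_cond[OF p1 r] by (simp_all add: \<psi>_def \<kappa>_def r1_def)
  have c2: "\<psi> r2 + \<kappa>^2 - 2 * Re (p2^2) \<le> 0" and g2: "r2 \<ge> \<rho>^2"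
    using phi_cond[OF p2 r] by (simp_all add: \<psi>_def \<kappa>_def r2_def)
  have ReW: "Re W = (1 - t) * Re (p1^2) + t * Re (p2^2)" by (simp add: W_def)
  have "rr \<le> cmod ((1 - of_real t) * p1^2) + cmod (of_real t * p2^2)"
    unfolding rr_def W_def by (rule norm_triangle_ineq)
  also have "\<dots> = R"
  proof -
    have "cmod ((1 - of_real t) * p1^2) = (1 - t) * r1"
    proof -
      have "1 - complex_of_real t = of_real (1 - t)" by simp
      hence "cmod (1 - complex_of_real t) = 1 - t" using t by (simp only: norm_of_real)
      thus ?thesis by (simp add: norm_mult norm_power r1_def)
    qed
    moreover have "cmod (of_real t * p2^2) = t * r2"
      using t by (simp add: norm_mult norm_power r2_def)
    ultimately show ?thesis by (simp add: R_def)
  qed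
  finally have rR: "rr \<le> R" .
  have "(1 - t) * \<psi> r1 + t * \<psi> r2 - \<psi> R = t * (1 - t) * (r1 - r2)^2"
    by (simp add: \<psi>_def R_def power2_eq_square algebra_simps)
  moreover have "t * (1 - t) * (r1 - r2)^2 \<ge> 0" using t by simp
  ultimately have cvx: "\<psi> R \<le> (1 - t) * \<psi> r1 + t * \<psi> r2" by linarith
  have "(1 - t) * (\<psi> r1 + \<kappa>^2 - 2 * Re (p1^2)) + t * (\<psi> r2 + \<kappa>^2 - 2 * Re (p2^2)) \<le> 0"
  proof -
    have "(1 - t) * (\<psi> r1 + \<kappa>^2 - 2 * Re (p1^2)) \<le> 0" using c1 t by (intro mult_nonneg_nonpos) auto
    moreover have "t * (\<psi> r2 + \<kappa>^2 - 2 * Re (p2^2)) \<le> 0" using c2 t by (intro mult_nonneg_nonpos) auto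
    ultimately show ?thesis by linarith
  qed
  hence cR: "\<psi> R + \<kappa>^2 - 2 * Re W \<le> 0" using cvx by (simp add: ReW algebra_simps)
  have rrg: "rr \<ge> \<rho>^2"
  proof (rule ccontr)
    assume "\<not> rr \<ge> \<rho>^2"
    hence "Re W < \<rho>^2" using complex_Re_le_cmod[of W] by (simp add: rr_def)
    moreover have "0 - (\<rho>^2)^2 \<le> \<psi> R"
    proof -
      have "\<psi> R + (\<rho>^2)^2 = (R - \<rho>^2)^2" by (simp add: \<psi>_def power2_eq_square algebra_simps)
      thus ?thesis using zero_le_power2[of "R - \<rho>^2"] by linarith
    qed
    moreover have "\<rho>^2 \<le> (1/2)^2" using r by (intro power_mono) auto
    ultimately have "0 - (\<rho>^2)^2 + \<kappa>^2 - 2 * \<rho>^2 < 0" using cR by linarith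
    moreover have "0 - (\<rho>^2)^2 + \<kappa>^2 - 2 * \<rho>^2 = 1 - 4 * \<rho>^2" by (simp add: \<kappa>_def power2_eq_square algebra_simps)
    ultimately show False using \<open>\<rho>^2 \<le> (1/2)^2\<close> by (simp add: power_divide)
  qed
  have "\<psi> rr \<le> \<psi> R"
  proof -
    have "\<psi> R - \<psi> rr = (R - rr) * (R + rr - 2 * \<rho>^2)" by (simp add: \<psi>_def power2_eq_square algebra_simps)
    moreover have "(R - rr) * (R + rr - 2 * \<rho>^2) \<ge> 0" using rR rrg by simp
    ultimately show ?thesis by linarith
  qed
  hence cW: "rr^2 - 2*\<rho>^2*rr + \<kappa>^2 - 2 * Re W \<le> 0" using cR by (simp add: \<psi>_def)
  have s2: "cmod s ^ 2 = rr" by (simp add: s_def rr_def)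
  have Rs: "4 * Re s ^ 2 = 2 * (rr + Re W)" unfolding s_def rr_def by (rule Re_csqrt_sq)
  have "(rr + \<kappa>)^2 \<le> (2 * Re s)^2"
  proof -
    have "(rr + \<kappa>)^2 = rr^2 - 2*\<rho>^2*rr + \<kappa>^2 + 2 * rr" by (simp add: \<kappa>_def power2_eq_square algebra_simps)
    thus ?thesis using cW Rs by (simp add: power_mult_distrib)
  qed
  moreover have "0 \<le> 2 * Re s" using Re_csqrt[of W] by (simp add: s_def del: csqrt.simps)
  ultimately have h: "rr + \<kappa> \<le> 2 * Re s" by (rule power2_le_imp_le)
  have "cmod (s - 1)^2 = cmod s ^ 2 - 2 * Re s + 1"
  proof -
    have "cmod (s - 1)^2 = (Re s - 1)^2 + (Im s)^2" by (simp add: cmod_sq)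
    also have "\<dots> = (Re s^2 + Im s^2) - 2 * Re s + 1" by (simp add: power2_diff)
    also have "\<dots> = cmod s ^ 2 - 2 * Re s + 1" by (simp add: cmod_sq)
    finally show ?thesis .
  qed
  also have "\<dots> \<le> \<rho>^2" using h s2 unfolding \<kappa>_def by linarith
  finally have "cmod (s - 1)^2 \<le> \<rho>^2" .
  hence "cmod (s - 1) \<le> \<rho>" using r(1) by (rule power2_le_imp_le)
  thus ?thesis by (simp only: s_def W_def)
qed

lemma cardioid_ne0: "cmod v < 1 \<Longrightarrow> 1 + v + v^2/2 \<noteq> 0"
proof
  assume n0: "cmod v < 1" and "1 + v + v^2/2 = 0"
  hence "(1 + v)^2 = -1" by (simp add: power2_eq_square field_simps)
  hence r: "(1 + Re v)^2 - (Im v)^2 = -1" and i: "2 * (1 + Re v) * Im v = 0"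
    by (auto simp: complex_eq_iff Re_power2 Im_power2)
  have "cmod v ^ 2 < 1" using n0 by (simp add: power_less_one_iff)
  hence n: "(Re v)^2 + (Im v)^2 < 1" by (simp add: cmod_power2)
  from i have "Re v = -1 \<or> Im v = 0" by auto
  then show False
  proof
    assume "Re v = -1" then show False using r n by simp
  next
    assume "Im v = 0" hence "(1 + Re v)^2 = -1" using r by simp
    thus False using zero_le_power2[of "1 + Re v"] by linarith
  qed
qed

lemma coeff_bound:
  assumes "S_car f" shows "cmod (coeff2 f) \<le> 1"
proof -
  have hf: "f holomorphic_on ball 0 1" and f0: "f 0 = 0" and f10: "deriv f 0 = 1"
    using assms by (auto simp: S_car_def classA_def unit_disc_def)
  obtain w where hw: "w holomorphic_on ball 0 1" and wim: "w ` ball 0 1 \<subseteq> ball 0 1"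
    and w0: "w 0 = 0" and weq: "\<And>z. z \<in> ball 0 1 \<Longrightarrow> starquot f z = cardioid_fun (w z)"
    using assms by (auto simp: S_car_def subordinate_def unit_disc_def)
  have wn: "cmod (w z) < 1" if "cmod z < 1" for z
  proof -
    have "z \<in> ball 0 1" using that by simp
    hence "w z \<in> ball 0 1" using wim by blast
    thus ?thesis by simp
  qed
  define P where "P = (\<lambda>z. 1 + w z + (w z)^2/2)"
  have hP: "P holomorphic_on ball 0 1" unfolding P_def using hw by (auto intro!: holomorphic_intros)
  have os: "open (ball (0::complex) 1)" by simp
  define f1 where "f1 = deriv f"
  define f2 where "f2 = deriv f1"
  define P1 where "P1 = deriv P"
  have hf1: "f1 holomorphic_on ball 0 1" unfolding f1_def using hf by (auto intro!: holomorphic_intros)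
  have hP1: "P1 holomorphic_on ball 0 1" unfolding P1_def using hP by (auto intro!: holomorphic_intros)
  have hf2: "f2 holomorphic_on ball 0 1" unfolding f2_def using hf1 by (auto intro!: holomorphic_intros)
  have dP: "(P has_field_derivative P1 z) (at z)" if "z \<in> ball 0 1" for z
    unfolding P1_def by (rule holomorphic_derivI[OF hP os that])
  have dP1: "(P1 has_field_derivative deriv P1 z) (at z)" if "z \<in> ball 0 1" for z
    by (rule holomorphic_derivI[OF hP1 os that])
  have df: "(f has_field_derivative f1 z) (at z)" if "z \<in> ball 0 1" for z
    unfolding f1_def by (rule holomorphic_derivI[OF hf os that])
  have df1: "(f1 has_field_derivative f2 z) (at z)" if "z \<in> ball 0 1" for z
    unfolding f2_def by (rule holomorphic_derivI[OF hf1 os that])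
  have df2: "(f2 has_field_derivative deriv f2 z) (at z)" if "z \<in> ball 0 1" for z
    by (rule holomorphic_derivI[OF hf2 os that])
  have eq: "P z * f z = z * f1 z" if z: "z \<in> ball 0 1" for z
  proof (cases "z = 0")
    case True then show ?thesis using f0 by simp
  next
    case False
    have c: "starquot f z = P z" using weq[OF z] by (simp add: P_def cardioid_fun_def)
    have "P z \<noteq> 0" unfolding P_def by (rule cardioid_ne0) (use wn z in auto)
    hence "f z \<noteq> 0" using c False by (auto simp: starquot_def)
    moreover have "z * deriv f z / f z = P z" using c False by (simp add: starquot_def)
    ultimately have "P z * f z = z * deriv f z" by (simp add: divide_eq_eq)
    then show ?thesis by (simp add: f1_def)
  qed
  have d1: "P z * f1 z + P1 z * f z = z * f2 z + 1 * f1 z" if z: "z \<in> ball 0 1" for z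
  proof -
    have a: "((\<lambda>z. P z * f z) has_field_derivative (P z * f1 z + P1 z * f z)) (at z)"
      by (rule DERIV_mult'[OF dP[OF z] df[OF z]])
    have b: "((\<lambda>z. z * f1 z) has_field_derivative (z * f2 z + 1 * f1 z)) (at z)"
      by (rule DERIV_mult'[OF DERIV_ident df1[OF z]])
    have a': "((\<lambda>z. z * f1 z) has_field_derivative (P z * f1 z + P1 z * f z)) (at z)"
      by (rule has_field_derivative_transform_within_open[OF a os z]) (simp add: eq)
    show ?thesis using DERIV_unique[OF a' b] .
  qed
  have z0: "(0::complex) \<in> ball 0 1" by simp
  have a: "((\<lambda>z. P z * f1 z + P1 z * f z) has_field_derivative
          ((P 0 * f2 0 + P1 0 * f1 0) + (P1 0 * f1 0 + deriv P1 0 * f 0))) (at 0)"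
    by (rule DERIV_add[OF DERIV_mult'[OF dP[OF z0] df1[OF z0]] DERIV_mult'[OF dP1[OF z0] df[OF z0]]])
  have a': "((\<lambda>z. z * f2 z + 1 * f1 z) has_field_derivative
          ((P 0 * f2 0 + P1 0 * f1 0) + (P1 0 * f1 0 + deriv P1 0 * f 0))) (at 0)"
    by (rule has_field_derivative_transform_within_open[OF a os z0]) (simp add: d1)
  have b: "((\<lambda>z. z * f2 z + 1 * f1 z) has_field_derivative
          ((0 * deriv f2 0 + 1 * f2 0) + (1 * f2 0 + 0 * f1 0))) (at 0)"
    by (rule DERIV_add[OF DERIV_mult'[OF DERIV_ident df2[OF z0]] DERIV_mult'[OF DERIV_const df1[OF z0]]])
  have e: "(P 0 * f2 0 + P1 0 * f1 0) + (P1 0 * f1 0 + deriv P1 0 * f 0) = (0 * deriv f2 0 + 1 * f2 0) + (1 * f2 0 + 0 * f1 0)"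
    using DERIV_unique[OF a' b] by simp
  have P0: "P 0 = 1" by (simp add: P_def w0)
  have "2 * P1 0 = f2 0" using e f0 f10 P0 by (simp add: f1_def)
  hence "P1 0 = f2 0 / 2" by (metis nonzero_mult_div_cancel_left zero_neq_numeral)
  hence c2: "coeff2 f = P1 0" by (simp add: coeff2_def f2_def f1_def)
  have dw: "(w has_field_derivative deriv w 0) (at 0)" by (rule holomorphic_derivI[OF hw os z0])
  have "(P has_field_derivative (deriv w 0 + 2 * w 0 ^ 1 * deriv w 0 / 2)) (at 0)"
    using dw unfolding P_def by (auto intro!: derivative_eq_intros)
  hence "P1 0 = deriv w 0" unfolding P1_def using w0 by (simp add: DERIV_imp_deriv)
  moreover have "norm (deriv w 0) \<le> 1"
    by (rule Schwarz_Lemma(2)[OF hw w0, of 0]) (use wn in auto)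
  ultimately show ?thesis using c2 by simp
qed

definition qf :: "complex \<Rightarrow> complex \<Rightarrow> complex" where
  "qf b = (\<lambda>z. z + b * z^2)"

lemma partial2_qf: "partial2 f = qf (coeff2 f)"
  by (auto simp: partial2_def qf_def fun_eq_iff)

lemma qf_deriv_has: "(qf b has_field_derivative (1 + 2*b*z)) (at z)"
  unfolding qf_def by (auto intro!: derivative_eq_intros)

lemma qf_deriv: "deriv (qf b) z = 1 + 2*b*z"
  by (rule DERIV_imp_deriv[OF qf_deriv_has])

lemma qf_holo: "qf b holomorphic_on S"
  unfolding qf_def by (auto intro!: holomorphic_intros)

lemma starquot_qf: "z \<noteq> 0 \<Longrightarrow> 1 + b*z \<noteq> 0 \<Longrightarrow> starquot (qf b) z = (1+2*b*z)/(1+b*z)"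
proof -
  assume z: "z \<noteq> 0" and b: "1 + b*z \<noteq> 0"
  have "starquot (qf b) z = (z * (1 + 2*b*z)) / (z * (1 + b*z))"
    unfolding starquot_def qf_deriv using z by (simp add: qf_def power2_eq_square algebra_simps)
  also have "\<dots> = (1+2*b*z)/(1+b*z)" using z by simp
  finally show ?thesis .
qed

lemma scaled_qf: "\<rho> \<noteq> 0 \<Longrightarrow> (\<lambda>z. partial2 f (complex_of_real \<rho> * z) / complex_of_real \<rho>) = qf (coeff2 f * complex_of_real \<rho>)"
  by (auto simp: partial2_def qf_def fun_eq_iff power2_eq_square field_simps)

lemma classA_qf: "classA (qf b)"
  by (simp add: classA_def qf_holo qf_deriv) (simp add: qf_def)

lemma qf_inv:
  assumes a: "a \<noteq> 0" and e: "s^2 - 1 = c * ((1 + 2*a*z)^2 - 1)"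
  shows "qf a ((s - 1) / (2*a)) = c * qf a z"
proof -
  have "4 * a * qf a ((s - 1) / (2*a)) = s^2 - 1"
    using a by (simp add: qf_def power2_eq_square field_simps)
  also have "\<dots> = 4 * a * (c * qf a z)"
    using e by (simp add: qf_def power2_eq_square algebra_simps)
  finally show ?thesis using a by simp
qed

lemma qf_inj:
  assumes "cmod a \<le> 1" shows "inj_on (qf a) (ball 0 (1/2))"
proof (rule inj_onI)
  fix z1 z2 assume z1: "z1 \<in> ball 0 (1/2)" and z2: "z2 \<in> ball 0 (1/2)" and e: "qf a z1 = qf a z2"
  have "(z1 - z2) * (1 + a * (z1 + z2)) = 0"
    using e by (simp add: qf_def power2_eq_square algebra_simps)
  moreover have "1 + a * (z1 + z2) \<noteq> 0"
  proof
    assume "1 + a * (z1 + z2) = 0"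
    hence "a * (z1 + z2) = -1" by (metis add.commute add_eq_0_iff)
    hence "cmod (a * (z1 + z2)) = 1" by simp
    moreover have "cmod (a * (z1 + z2)) < 1"
    proof -
      have "cmod (z1 + z2) < 1" using z1 z2 norm_triangle_ineq[of z1 z2] by simp
      hence "cmod a * cmod (z1 + z2) < 1"
        using assms by (metis mult_le_one less_eq_real_def mult_less_cancel_right1 norm_ge_zero
            mult_right_mono order_le_less_trans mult_1)
      thus ?thesis by (simp add: norm_mult)
    qed
    ultimately show False by simp
  qed
  ultimately show "z1 = z2" by simp
qed

lemma starlike_qf:
  assumes a1: "cmod a \<le> 1" shows "starlike_in (qf a) (1/2)"
  unfolding starlike_in_def
proof (intro conjI qf_holo qf_inj[OF a1] ballI subsetI)
  show "0 \<in> qf a ` ball 0 (1/2)" by (rule image_eqI[of _ _ 0]) (auto simp: qf_def)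
next
  fix x y assume x: "x \<in> qf a ` ball 0 (1/2)" and y: "y \<in> closed_segment 0 x"
  obtain z where z: "cmod z < 1/2" and xz: "x = qf a z" using x by auto
  obtain u where u: "0 \<le> u" "u \<le> 1" and yu: "y = of_real u * x"
    using y by (auto simp: closed_segment_def scaleR_conv_of_real)
  show "y \<in> qf a ` ball 0 (1/2)"
  proof (cases "a = 0")
    case True
    have "cmod (of_real u * z) \<le> cmod z" using u by (simp add: norm_mult mult_left_le_one_le)
    hence "of_real u * z \<in> ball 0 (1/2)" using z by simp
    moreover have "y = qf a (of_real u * z)" using True yu xz by (simp add: qf_def)
    ultimately show ?thesis by blast
  next
    case False
    define p where "p = 1 + 2 * a * z"
    define s where "s = csqrt (1 - of_real u + of_real u * p^2)"
    have az: "cmod (2 * a * z) < 1"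
    proof -
      have "cmod (2 * a * z) = 2 * cmod a * cmod z" by (simp add: norm_mult)
      also have "\<dots> \<le> 2 * cmod z" using a1 by (simp add: mult_left_le_one_le)
      finally show ?thesis using z by simp
    qed
    have Rp: "Re p > 0"
    proof -
      have "Re (2 * a * z) \<ge> - cmod (2 * a * z)" using abs_Re_le_cmod[of "2*a*z"] by linarith
      thus ?thesis using az by (simp add: p_def)
    qed
    have sp: "cmod (s - 1) \<le> cmod (p - 1)" unfolding s_def by (rule key_star[OF u Rp])
    define z' where "z' = (s - 1) / (2 * a)"
    have "cmod z' = cmod (s - 1) / (2 * cmod a)" by (simp add: z'_def norm_divide norm_mult)
    also have "\<dots> \<le> cmod (p - 1) / (2 * cmod a)" using sp False by (simp add: divide_right_mono)
    also have "\<dots> = cmod z" using False by (simp add: p_def norm_mult)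
    finally have "z' \<in> ball 0 (1/2)" using z by simp
    moreover have "qf a z' = of_real u * qf a z"
      unfolding z'_def
    proof (rule qf_inv[OF False])
      show "s^2 - 1 = of_real u * ((1 + 2*a*z)^2 - 1)" by (simp add: s_def p_def algebra_simps)
    qed
    ultimately show ?thesis using yu xz by (metis image_eqI)
  qed
qed

lemma qf_4: "a \<noteq> 0 \<Longrightarrow> 4 * a * qf a ((s - 1) / (2*a)) = s^2 - 1"
  by (simp add: qf_def power2_eq_square field_simps)

lemma qf_4': "4 * a * qf a z = (1 + 2*a*z)^2 - 1"
  by (simp add: qf_def power2_eq_square algebra_simps)

lemma convex_qf:
  assumes a1: "cmod a \<le> 1" shows "convex_in (qf a) (1/4)"
  unfolding convex_in_def
proof (intro conjI qf_holo)
  show "inj_on (qf a) (ball 0 (1/4))" by (rule inj_on_subset[OF qf_inj[OF a1]]) auto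
  show "convex (qf a ` ball 0 (1/4))"
    unfolding convex_alt
  proof (intro ballI allI impI)
    fix x y and u :: real
    assume x: "x \<in> qf a ` ball 0 (1/4)" and y: "y \<in> qf a ` ball 0 (1/4)" and u: "0 \<le> u \<and> u \<le> 1"
    obtain z1 where z1: "cmod z1 < 1/4" and xz: "x = qf a z1" using x by auto
    obtain z2 where z2: "cmod z2 < 1/4" and yz: "y = qf a z2" using y by auto
    have tgt: "(1 - u) *\<^sub>R x + u *\<^sub>R y = of_real (1 - u) * qf a z1 + of_real u * qf a z2"
      by (simp add: xz yz scaleR_conv_of_real)
    show "(1 - u) *\<^sub>R x + u *\<^sub>R y \<in> qf a ` ball 0 (1/4)"
    proof (cases "a = 0")
      case True
      define z' where "z' = of_real (1 - u) * z1 + of_real u * z2"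
      have "cmod z' \<le> (1 - u) * cmod z1 + u * cmod z2"
        unfolding z'_def using u norm_triangle_ineq[of "of_real (1 - u) * z1" "of_real u * z2"]
        by (simp add: norm_mult del: of_real_diff)
      also have "\<dots> < 1/4"
      proof -
        have "(1 - u) * cmod z1 \<le> (1 - u) * (1/4)" using u z1 by (intro mult_left_mono) auto
        moreover have "u * cmod z2 \<le> u * (1/4)" using u z2 by (intro mult_left_mono) auto
        moreover have "(1 - u) * cmod z1 < (1 - u) * (1/4) \<or> u * cmod z2 < u * (1/4)"
          using u z1 z2 by (cases "u = 1") auto
        ultimately show ?thesis by (auto simp: algebra_simps)
      qed
      finally have "z' \<in> ball 0 (1/4)" by simp
      moreover have "qf a z' = (1 - u) *\<^sub>R x + u *\<^sub>R y" using True tgt by (simp add: qf_def z'_def)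
      ultimately show ?thesis by (metis image_eqI)
    next
      case False
      define p1 where "p1 = 1 + 2 * a * z1"
      define p2 where "p2 = 1 + 2 * a * z2"
      define \<rho> where "\<rho> = max (cmod (p1 - 1)) (cmod (p2 - 1))"
      have pa: "cmod (p - 1) < cmod a / 2" if "p = 1 + 2 * a * z" "cmod z < 1/4" for p z
      proof -
        have "cmod (p - 1) = 2 * cmod a * cmod z" using that by (simp add: norm_mult)
        also have "\<dots> < 2 * cmod a * (1/4)" using that False by (intro mult_strict_left_mono) auto
        finally show ?thesis by simp
      qed
      have r1: "cmod (p1 - 1) < cmod a / 2" using pa[OF p1_def z1] .
      have r2: "cmod (p2 - 1) < cmod a / 2" using pa[OF p2_def z2] .
      have \<rho>a: "\<rho> < cmod a / 2" using r1 r2 by (simp add: \<rho>_def)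
      have \<rho>0: "0 \<le> \<rho>" by (simp add: \<rho>_def le_max_iff_disj)
      have \<rho>h: "\<rho> \<le> 1/2" using \<rho>a a1 by simp
      define s where "s = csqrt ((1 - of_real u) * p1^2 + of_real u * p2^2)"
      have sr: "cmod (s - 1) \<le> \<rho>" unfolding s_def
        by (rule key_convex[OF \<rho>0 \<rho>h]) (use u in \<open>auto simp: \<rho>_def\<close>)
      define z' where "z' = (s - 1) / (2 * a)"
      have "cmod z' = cmod (s - 1) / (2 * cmod a)" by (simp add: z'_def norm_divide norm_mult)
      also have "\<dots> \<le> \<rho> / (2 * cmod a)" using sr False by (simp add: divide_right_mono)
      also have "\<dots> < (cmod a / 2) / (2 * cmod a)" using \<rho>a False by (simp add: divide_strict_right_mono)
      also have "\<dots> = 1/4" using False by simp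
      finally have "z' \<in> ball 0 (1/4)" by simp
      moreover have "qf a z' = (1 - u) *\<^sub>R x + u *\<^sub>R y"
      proof -
        have "4 * a * qf a z' = s^2 - 1" unfolding z'_def by (rule qf_4[OF False])
        also have "\<dots> = (1 - of_real u) * (p1^2 - 1) + of_real u * (p2^2 - 1)"
          by (simp add: s_def algebra_simps)
        also have "\<dots> = 4 * a * (of_real (1 - u) * qf a z1 + of_real u * qf a z2)"
        proof -
          have h1: "p1^2 - 1 = 4*a*qf a z1" by (simp add: p1_def qf_4')
          have h2: "p2^2 - 1 = 4*a*qf a z2" by (simp add: p2_def qf_4')
          show ?thesis unfolding h1 h2 by (simp add: algebra_simps)
        qed
        finally show ?thesis using False tgt by simp
      qed
      ultimately show ?thesis by (metis image_eqI)
    qed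
  qed
qed

lemma Re_pos_not_nonpos: "Re z > 0 \<Longrightarrow> z \<notin> \<real>\<^sub>\<le>\<^sub>0"
  by (auto elim!: nonpos_Reals_cases)

lemma cardioid_m1: "cardioid_fun (q - 1) = (1 + q^2) / 2"
  by (simp add: cardioid_fun_def power2_eq_square field_simps)

lemma Re_ge_norm: "Re (1 + c) \<ge> 1 - cmod c"
  using abs_Re_le_cmod[of c] by simp

lemma scar_qf:
  assumes b: "cmod b \<le> 1/3" shows "S_car (qf b)"
  unfolding S_car_def subordinate_def
proof (intro conjI classA_qf exI[of _ "\<lambda>z. csqrt (1 + 3*b*z) / csqrt (1 + b*z) - 1"])
  have xr: "cmod (b * z) < 1/3" if "cmod z < 1" for z
  proof (cases "b = 0")
    case False
    have "cmod (b * z) = cmod b * cmod z" by (simp add: norm_mult)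
    also have "\<dots> < cmod b * 1" using that False by (intro mult_strict_left_mono) auto
    finally show ?thesis using b by simp
  qed simp
  have R1: "Re (1 + 3*b*z) > 0" if "cmod z < 1" for z
  proof -
    have "cmod (3*b*z) < 1" using xr[OF that] by (simp add: norm_mult)
    thus ?thesis using Re_ge_norm[of "3*b*z"] by linarith
  qed
  have R2: "Re (1 + b*z) > 0" if "cmod z < 1" for z
    using Re_ge_norm[of "b*z"] xr[OF that] by linarith
  have main: "cmod (csqrt (1 + 3*b*z) - csqrt (1 + b*z)) < cmod (csqrt (1 + b*z))"
     and bnz: "csqrt (1 + b*z) \<noteq> 0" if z: "cmod z < 1" for z
  proof -
    define x where "x = b * z"
    define r where "r = cmod x"
    define \<alpha> where "\<alpha> = csqrt (1 + 3*x)"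
    define \<beta> where "\<beta> = csqrt (1 + x)"
    have r3: "r < 1/3" using xr[OF z] by (simp add: r_def x_def)
    have n1: "cmod (1 + x) \<ge> 1 - r" using norm_triangle_ineq2[of 1 "-x"] by (simp add: r_def)
    have Rx: "Re (1 + x) \<ge> 1 - r" using Re_ge_norm[of x] by (simp add: r_def)
    have Rb2: "Re \<beta> ^ 2 = (cmod (1 + x) + Re (1 + x)) / 2"
      using Re_csqrt_sq[of "1 + x"] by (simp add: \<beta>_def)
    have nb: "cmod \<beta> ^ 2 = cmod (1 + x)" by (simp add: \<beta>_def)
    have E: "(cmod \<beta> * Re \<beta>)^2 = cmod (1 + x) * ((cmod (1 + x) + Re (1 + x)) / 2)"
      by (simp add: power_mult_distrib nb Rb2)
    have F: "(1 - r) * (1 - r) \<le> cmod (1 + x) * ((cmod (1 + x) + Re (1 + x)) / 2)"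
      using n1 Rx r3 by (intro mult_mono) auto
    have "(1 - r)^2 \<le> (cmod \<beta> * Re \<beta>)^2" using E F by (simp add: power2_eq_square)
    moreover have "0 \<le> cmod \<beta> * Re \<beta>" using Re_csqrt[of "1+x"] by (simp add: \<beta>_def del: csqrt.simps)
    ultimately have bb: "1 - r \<le> cmod \<beta> * Re \<beta>" by (rule power2_le_imp_le)
    hence "cmod \<beta> * Re \<beta> > 0" using r3 by linarith
    hence "Re \<beta> \<noteq> 0" by auto
    moreover have "Re \<beta> \<ge> 0" unfolding \<beta>_def by (rule Re_csqrt)
    ultimately have Rbpos: "Re \<beta> > 0" by linarith
    hence "\<beta> \<noteq> 0" by auto
    thus "csqrt (1 + b*z) \<noteq> 0" by (simp add: \<beta>_def x_def)
    have "Re (\<alpha> + \<beta>) \<ge> Re \<beta>" using Re_csqrt[of "1+3*x"] by (simp add: \<alpha>_def del: csqrt.simps)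
    hence ab: "cmod (\<alpha> + \<beta>) \<ge> Re \<beta>" using complex_Re_le_cmod[of "\<alpha> + \<beta>"] by linarith
    have "(\<alpha> - \<beta>) * (\<alpha> + \<beta>) = 2 * x"
      by (simp add: \<alpha>_def \<beta>_def algebra_simps power2_eq_square[symmetric])
    hence pr: "cmod (\<alpha> - \<beta>) * cmod (\<alpha> + \<beta>) = 2 * r" by (metis norm_mult r_def norm_numeral)
    have "cmod (\<alpha> - \<beta>) * Re \<beta> \<le> cmod (\<alpha> - \<beta>) * cmod (\<alpha> + \<beta>)" using ab by (simp add: mult_left_mono)
    also have "\<dots> < 1 - r" using pr r3 by simp
    also have "\<dots> \<le> cmod \<beta> * Re \<beta>" by (rule bb)
    finally have "cmod (\<alpha> - \<beta>) < cmod \<beta>" using Rbpos by simp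
    thus "cmod (csqrt (1 + 3*b*z) - csqrt (1 + b*z)) < cmod (csqrt (1 + b*z))"
      by (simp add: \<alpha>_def \<beta>_def x_def mult.assoc)
  qed
  show "(\<lambda>z. csqrt (1 + 3*b*z) / csqrt (1 + b*z) - 1) holomorphic_on unit_disc"
  proof -
    have N1: "1 + 3*b*z \<notin> \<real>\<^sub>\<le>\<^sub>0" if "z \<in> ball 0 1" for z
      using R1[of z] that Re_pos_not_nonpos by simp
    have N2: "1 + b*z \<notin> \<real>\<^sub>\<le>\<^sub>0" if "z \<in> ball 0 1" for z
      using R2[of z] that Re_pos_not_nonpos by simp
    have N3: "1 + b*z \<noteq> 0" if "z \<in> ball 0 1" for z
    proof
      assume "1 + b*z = 0"
      hence "Re (1 + b*z) = 0" by simp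
      thus False using R2[of z] that by simp
    qed
    show ?thesis unfolding unit_disc_def by (intro holomorphic_intros) (auto simp: N1 N2 N3)
  qed
  show "(\<lambda>z. csqrt (1 + 3*b*z) / csqrt (1 + b*z) - 1) ` unit_disc \<subseteq> unit_disc"
  proof (clarsimp simp: unit_disc_def)
    fix z :: complex assume z: "cmod z < 1"
    have "csqrt (1 + 3*b*z) / csqrt (1 + b*z) - 1 = (csqrt (1 + 3*b*z) - csqrt (1 + b*z)) / csqrt (1 + b*z)"
      using bnz[OF z] by (simp add: field_simps)
    thus "cmod (csqrt (1 + 3*b*z) / csqrt (1 + b*z) - 1) < 1"
      using main[OF z] bnz[OF z] by (simp add: norm_divide divide_less_eq)
  qed
  show "csqrt (1 + 3*b*0) / csqrt (1 + b*0) - 1 = 0" by simp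
  show "\<forall>z\<in>unit_disc. starquot (qf b) z = cardioid_fun (csqrt (1 + 3*b*z) / csqrt (1 + b*z) - 1)"
  proof (clarsimp simp: unit_disc_def)
    fix z :: complex assume z: "cmod z < 1"
    have bz: "1 + b*z \<noteq> 0"
    proof
      assume "1 + b*z = 0"
      hence "Re (1 + b*z) = 0" by simp
      thus False using R2[OF z] by linarith
    qed
    have "cardioid_fun (csqrt (1 + 3*b*z) / csqrt (1 + b*z) - 1) = (1 + (csqrt (1 + 3*b*z) / csqrt (1 + b*z))^2) / 2"
      by (rule cardioid_m1)
    also have "\<dots> = (1 + (1 + 3*b*z) / (1 + b*z)) / 2"
      by (simp add: power_divide)
    also have "\<dots> = (1 + 2*b*z) / (1 + b*z)"
    proof -
      have "2 + b * (z * 2) = 2 * (1 + b*z)" by (simp add: algebra_simps)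
      hence bz2: "2 + b * (z * 2) \<noteq> 0" using bz by (metis mult_eq_0_iff zero_neq_numeral)
      show ?thesis using bz bz2 by (simp add: field_simps)
    qed
    finally have c: "cardioid_fun (csqrt (1 + 3*b*z) / csqrt (1 + b*z) - 1) = (1 + 2*b*z) / (1 + b*z)" .
    show "starquot (qf b) z = cardioid_fun (csqrt (1 + 3*b*z) / csqrt (1 + b*z) - 1)"
    proof (cases "z = 0")
      case True thus ?thesis by (simp add: starquot_def cardioid_fun_def)
    next
      case False thus ?thesis using c starquot_qf[OF False bz] by simp
    qed
  qed
qed

definition f0 :: "complex \<Rightarrow> complex" where
  "f0 z = z * exp (z + z^2/4)"

lemma f0_has_deriv: "(f0 has_field_derivative exp (z + z^2/4) * (1 + z + z^2/2)) (at z)"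
proof -
  have "(f0 has_field_derivative (1 * exp (z + z^2/4) + z * (exp (z + z^2/4) * (1 + 2 * z / 4)))) (at z)"
    unfolding f0_def by (auto intro!: derivative_eq_intros)
  moreover have "1 * exp (z + z^2/4) + z * (exp (z + z^2/4) * (1 + 2 * z / 4)) = exp (z + z^2/4) * (1 + z + z^2/2)"
    by (simp add: power2_eq_square algebra_simps)
  ultimately show ?thesis by simp
qed

lemma f0_deriv: "deriv f0 = (\<lambda>z. exp (z + z^2/4) * (1 + z + z^2/2))"
  using f0_has_deriv DERIV_imp_deriv by blast

lemma f0_coeff2: "coeff2 f0 = 1"
proof -
  have "((\<lambda>z::complex. exp (z + z^2/4) * (1 + z + z^2/2)) has_field_derivative
          (exp (0 + 0^2/4) * (1 + 2 * 0 / 4) * (1 + 0 + 0^2/2) + exp (0 + 0^2/4) * (1 + 2 * 0 / 2))) (at 0)"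
    by (auto intro!: derivative_eq_intros)
  hence "deriv (deriv f0) 0 = 2" unfolding f0_deriv by (simp add: DERIV_imp_deriv)
  thus ?thesis by (simp add: coeff2_def)
qed

lemma f0_scar: "S_car f0"
  unfolding S_car_def classA_def subordinate_def
proof (intro conjI exI[of _ "\<lambda>z. z"])
  show "f0 holomorphic_on unit_disc" unfolding f0_def by (auto intro!: holomorphic_intros)
  show "f0 0 = 0" by (simp add: f0_def)
  show "deriv f0 0 = 1" by (simp add: f0_deriv)
  show "(\<lambda>z. z) holomorphic_on unit_disc" by simp
  show "(\<lambda>z. z) ` unit_disc \<subseteq> unit_disc" by simp
  show "(\<lambda>z. z) 0 = 0" by simp
  show "\<forall>z\<in>unit_disc. starquot f0 z = cardioid_fun z"
  proof
    fix z assume "z \<in> unit_disc"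
    show "starquot f0 z = cardioid_fun z"
    proof (cases "z = 0")
      case True thus ?thesis by (simp add: starquot_def cardioid_fun_def)
    next
      case False
      have "starquot f0 z = z * (exp (z + z^2/4) * (1 + z + z^2/2)) / (z * exp (z + z^2/4))"
        using False by (simp add: starquot_def f0_deriv f0_def)
      also have "\<dots> = 1 + z + z^2/2" using False by simp
      finally show ?thesis by (simp add: cardioid_fun_def)
    qed
  qed
qed

lemma partial2_f0: "partial2 f0 = qf 1"
  by (simp add: partial2_qf f0_coeff2)

lemma not_inj_q1:
  assumes r: "r > 1/2" shows "\<not> inj_on (qf 1) (ball 0 r)"
proof
  assume inj: "inj_on (qf 1) (ball 0 r)"
  define e where "e = (r - 1/2) / 2"
  have e1: "e > 0" using r by (simp add: e_def)
  have e2: "1/2 + e < r" using r by (simp add: e_def field_simps)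
  note e = e1 e2
  define z1 where "z1 = complex_of_real (-1/2 + e)"
  define z2 where "z2 = complex_of_real (-1/2 - e)"
  have "cmod z1 = \<bar>-1/2 + e\<bar>" unfolding z1_def by (rule norm_of_real)
  hence "cmod z1 < r" using e by simp
  hence m1: "z1 \<in> ball 0 r" by simp
  have "cmod z2 = \<bar>-1/2 - e\<bar>" unfolding z2_def by (rule norm_of_real)
  hence "cmod z2 < r" using e by simp
  hence m2: "z2 \<in> ball 0 r" by simp
  have "qf 1 z1 = qf 1 z2"
    by (simp add: qf_def z1_def z2_def power2_eq_square algebra_simps flip: of_real_mult of_real_add)
  hence "z1 = z2" using inj m1 m2 by (meson inj_onD)
  thus False using e by (simp add: z1_def z2_def)
qed

lemma not_convex_q1:
  assumes r: "r > 1/4" shows "\<not> convex_in (qf 1) r"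
proof (cases "r > 1/2")
  case True thus ?thesis using not_inj_q1 by (simp add: convex_in_def)
next
  case False
  hence r2: "r \<le> 1/2" by simp
  show ?thesis
  proof
    assume "convex_in (qf 1) r"
    hence cv: "convex (qf 1 ` ball 0 r)" by (simp add: convex_in_def)
    define y0 where "y0 = sqrt ((r - 1/4) / 2)"
    have y0sq: "y0^2 = (r - 1/4) / 2" using r by (simp add: y0_def)
    define z1 where "z1 = Complex (-1/4) y0"
    define z2 where "z2 = Complex (-1/4) (-y0)"
    have "cmod z1 ^ 2 < r^2"
    proof -
      have "cmod z1 ^ 2 = 1/16 + y0^2" by (simp only: cmod_sq) (simp add: z1_def power2_eq_square)
      also have "\<dots> < r^2"
      proof -
        have "r^2 - (1/16 + (r - 1/4)/2) = (r - 1/4)^2" by (simp add: power2_eq_square field_simps)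
        moreover have "(r - 1/4)^2 > 0" using r by simp
        ultimately show ?thesis using y0sq by linarith
      qed
      finally show ?thesis .
    qed
    hence "cmod z1 < r" using r power_less_imp_less_base[of "cmod z1" 2 r] by simp
    hence m1: "qf 1 z1 \<in> qf 1 ` ball 0 r" by simp
    have "cmod z2 = cmod z1" by (simp add: z1_def z2_def cmod_def)
    hence m2: "qf 1 z2 \<in> qf 1 ` ball 0 r" using \<open>cmod z1 < r\<close> by simp
    define m where "m = -1/4 + 1/16 - y0^2"
    have mid: "(1 - 1/2) *\<^sub>R qf 1 z1 + (1/2) *\<^sub>R qf 1 z2 = complex_of_real m"
      by (simp add: qf_def z1_def z2_def m_def complex_eq_iff power2_eq_square scaleR_conv_of_real algebra_simps)
    have "complex_of_real m \<in> qf 1 ` ball 0 r"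
      using cv m1 m2 mid unfolding convex_alt by (metis order_refl le_divide_eq_1_pos zero_less_one zero_less_divide_iff
        zero_le_divide_iff zero_le_one divide_le_eq_1 one_le_numeral less_eq_real_def zero_less_numeral)
    then obtain z where z: "cmod z < r" and qz: "qf 1 z = complex_of_real m" by auto
    have Rez: "\<bar>Re z\<bar> < 1/2" using z r2 abs_Re_le_cmod[of z] by linarith
    have "Im (qf 1 z) = Im z * (1 + 2 * Re z)" by (simp add: qf_def Im_power2 algebra_simps)
    hence "Im z * (1 + 2 * Re z) = 0" using qz by simp
    moreover have "1 + 2 * Re z > 0" using Rez by linarith
    ultimately have Imz: "Im z = 0" by simp
    have "Re (qf 1 z) = Re z + Re z ^ 2" using Imz by (simp add: qf_def Re_power2)
    hence eqm: "Re z + Re z ^ 2 = m" using qz by simp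
    have "\<bar>Re z\<bar> < r" using z abs_Re_le_cmod[of z] by linarith
    hence "(Re z + r) * (Re z - r + 1) > 0" using r2 by (intro mult_pos_pos) auto
    hence "Re z + Re z ^ 2 > r^2 - r" by (simp add: power2_eq_square algebra_simps)
    moreover have "r^2 - r - m = (r - 1/4)^2" using y0sq by (simp add: m_def power2_eq_square algebra_simps)
    moreover have "(r - 1/4)^2 > 0" using r by simp
    ultimately show False using eqm by linarith
  qed
qed

lemma not_scar_q:
  assumes "\<rho> > 1/3" "\<rho> \<le> 1" shows "\<not> S_car (qf (complex_of_real \<rho>))"
proof
  assume "S_car (qf (complex_of_real \<rho>))"
  then obtain w where wim: "w ` unit_disc \<subseteq> unit_disc"
    and weq: "\<forall>z\<in>unit_disc. starquot (qf (complex_of_real \<rho>)) z = cardioid_fun (w z)"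
    by (auto simp: S_car_def subordinate_def)
  define z0 where "z0 = complex_of_real (- 1 / (3 * \<rho>))"
  have rp: "\<rho> > 0" using assms by simp
  have "1 / (3 * \<rho>) < 1" using assms by (simp add: divide_less_eq)
  moreover have "cmod z0 = \<bar>- 1/(3*\<rho>)\<bar>" unfolding z0_def by (rule norm_of_real)
  ultimately have z0d: "z0 \<in> unit_disc" using rp by (simp add: unit_disc_def)
  have z0n: "z0 \<noteq> 0" using rp by (simp add: z0_def)
  have rr: "\<rho> * (- 1 / (3 * \<rho>)) = - 1/3" using rp by (simp add: field_simps)
  have "complex_of_real \<rho> * z0 = complex_of_real (- 1/3)"
    by (simp only: z0_def of_real_mult[symmetric] rr)
  hence rz: "complex_of_real \<rho> * z0 = - 1/3" by simp
  have "1 + complex_of_real \<rho> * z0 \<noteq> 0" using rz by simp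
  hence "starquot (qf (complex_of_real \<rho>)) z0 = (1 + 2 * (complex_of_real \<rho> * z0)) / (1 + complex_of_real \<rho> * z0)"
    using starquot_qf[OF z0n] by (simp add: mult.assoc)
  also have "\<dots> = 1/2" using rz by simp
  finally have "cardioid_fun (w z0) = 1/2" using weq z0d by simp
  moreover have "(w z0 + 1)^2 = 2 * (cardioid_fun (w z0) - 1/2)"
    by (simp add: cardioid_fun_def power2_eq_square algebra_simps)
  ultimately have "(w z0 + 1)^2 = 0" by (simp add: mult.commute)
  hence "w z0 = -1" by (simp add: add_eq_0_iff2)
  moreover have "w z0 \<in> unit_disc" using wim z0d by blast
  ultimately show False by (simp add: unit_disc_def)
qed

theorem theorem3p4:
  shows "(\<forall>f. S_car f \<longrightarrow>
            starlike_in (partial2 f) (1/2) \<and>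
            convex_in (partial2 f) (1/4) \<and>
            (\<forall>\<rho>::real. 0 < \<rho> \<and> \<rho> \<le> 1/3 \<longrightarrow>
               S_car (\<lambda>z. partial2 f (complex_of_real \<rho> * z) / complex_of_real \<rho>)))
       \<and> (\<forall>r::real. r > 1/2 \<longrightarrow> \<not> (\<forall>f. S_car f \<longrightarrow> starlike_in (partial2 f) r))
       \<and> (\<forall>r::real. r > 1/4 \<longrightarrow> \<not> (\<forall>f. S_car f \<longrightarrow> convex_in (partial2 f) r))
       \<and> (\<forall>r::real. r > 1/3 \<longrightarrow> \<not> (\<forall>f. S_car f \<longrightarrow> (\<forall>\<rho>::real. 0 < \<rho> \<and> \<rho> \<le> r \<longrightarrow>
               S_car (\<lambda>z. partial2 f (complex_of_real \<rho> * z) / complex_of_real \<rho>))))"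
proof (intro conjI allI impI)
  fix f assume f: "S_car f"
  have c: "cmod (coeff2 f) \<le> 1" by (rule coeff_bound[OF f])
  show "starlike_in (partial2 f) (1/2)" unfolding partial2_qf by (rule starlike_qf[OF c])
  show "convex_in (partial2 f) (1/4)" unfolding partial2_qf by (rule convex_qf[OF c])
  fix \<rho> :: real assume r: "0 < \<rho> \<and> \<rho> \<le> 1/3"
  have "cmod (coeff2 f * complex_of_real \<rho>) \<le> 1/3"
  proof -
    have "cmod (coeff2 f * complex_of_real \<rho>) = cmod (coeff2 f) * \<rho>" using r by (simp add: norm_mult)
    also have "\<dots> \<le> 1 * (1/3)" using c r by (intro mult_mono) auto
    finally show ?thesis by simp
  qed
  thus "S_car (\<lambda>z. partial2 f (complex_of_real \<rho> * z) / complex_of_real \<rho>)"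
    using r by (simp add: scaled_qf scar_qf)
next
  fix r :: real assume r: "r > 1/2"
  show "\<not> (\<forall>f. S_car f \<longrightarrow> starlike_in (partial2 f) r)"
  proof
    assume "\<forall>f. S_car f \<longrightarrow> starlike_in (partial2 f) r"
    hence "starlike_in (qf 1) r" using f0_scar partial2_f0 by metis
    thus False using not_inj_q1[OF r] by (simp add: starlike_in_def)
  qed
next
  fix r :: real assume r: "r > 1/4"
  show "\<not> (\<forall>f. S_car f \<longrightarrow> convex_in (partial2 f) r)"
  proof
    assume "\<forall>f. S_car f \<longrightarrow> convex_in (partial2 f) r"
    hence "convex_in (qf 1) r" using f0_scar partial2_f0 by metis
    thus False using not_convex_q1[OF r] by simp
  qed
next
  fix r :: real assume r: "r > 1/3"
  show "\<not> (\<forall>f. S_car f \<longrightarrow> (\<forall>\<rho>::real. 0 < \<rho> \<and> \<rho> \<le> r \<longrightarrow>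
               S_car (\<lambda>z. partial2 f (complex_of_real \<rho> * z) / complex_of_real \<rho>)))"
  proof
    assume H: "\<forall>f. S_car f \<longrightarrow> (\<forall>\<rho>::real. 0 < \<rho> \<and> \<rho> \<le> r \<longrightarrow>
               S_car (\<lambda>z. partial2 f (complex_of_real \<rho> * z) / complex_of_real \<rho>))"
    define \<rho> where "\<rho> = min r 1"
    have r1: "\<rho> > 1/3" "\<rho> \<le> 1" "0 < \<rho>" "\<rho> \<le> r" using r by (auto simp: \<rho>_def)
    have "S_car (\<lambda>z. partial2 f0 (complex_of_real \<rho> * z) / complex_of_real \<rho>)"
      using H f0_scar r1 by blast
    hence "S_car (qf (complex_of_real \<rho>))" using r1 by (simp add: scaled_qf f0_coeff2)
    thus False using not_scar_q[OF r1(1,2)] by simp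
  qed
qed

end
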